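(* Let $v\ge 2$ and $s\ge 2$ be integers. Then (1) $K_{v}^{RT}(2,s,s)\le v^{s-2}(v^{2}-1)$; (2) $K_{v}^{RT}(3,s,2s-1)\le v(v^{s}-1)$.
   Context: For positive integers $m,s$, the RT poset $[m\times s]$ is the set $\{1,\ldots,ms\}$ partitioned into $m$ blocks $B_i=\{is+1,\ldots,(i+1)s\}$; each block is a chain under the usual order of the integers, and elements of different blocks are incomparable. An ideal is a down-closed subset; $\langle A\rangle$ denotes the smallest ideal containing $A$. For $x,y\in\mathbb{Z}_v^{ms}$, $d_{RT}(x,y)=|\langle\{i:x_i\neq y_i\}\rangle|$. A code $C\subseteq \mathbb{Z}_v^{ms}$ is an $R$-covering if every $x\in\mathbb{Z}_v^{ms}$ has some $c\in C$ with $d_{RT}(x,c)\le R$; $K_v^{RT}(m,s,R)$ is the smallest size of an $R$-covering. *)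

theory Defs
  imports Main
begin

text \<open>Coordinates are 0-indexed: position j (j < m*s) lies in block j div s
  (block i = {i*s ..< (i+1)*s}), and within a block the order is the usual order.\<close>

definition rt_le :: "nat \<Rightarrow> nat \<Rightarrow> nat \<Rightarrow> bool" where
  "rt_le s i j \<longleftrightarrow> i div s = j div s \<and> i \<le> j"

definition rt_ideal :: "nat \<Rightarrow> nat set \<Rightarrow> nat set" where
  "rt_ideal s A = {i. \<exists>a\<in>A. rt_le s i a}"

definition words :: "nat \<Rightarrow> nat \<Rightarrow> (nat \<Rightarrow> nat) set" where
  "words v n = {x. (\<forall>j<n. x j < v) \<and> (\<forall>j\<ge>n. x j = 0)}"

definition d_RT :: "nat \<Rightarrow> nat \<Rightarrow> (nat \<Rightarrow> nat) \<Rightarrow> (nat \<Rightarrow> nat) \<Rightarrow> nat" where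
  "d_RT m s x y = card (rt_ideal s {i. i < m * s \<and> x i \<noteq> y i})"

definition is_RT_covering :: "nat \<Rightarrow> nat \<Rightarrow> nat \<Rightarrow> nat \<Rightarrow> (nat \<Rightarrow> nat) set \<Rightarrow> bool" where
  "is_RT_covering v m s R C \<longleftrightarrow> C \<subseteq> words v (m * s) \<and>
     (\<forall>x\<in>words v (m * s). \<exists>c\<in>C. d_RT m s x c \<le> R)"

definition K_RT :: "nat \<Rightarrow> nat \<Rightarrow> nat \<Rightarrow> nat \<Rightarrow> nat" where
  "K_RT v m s R = (LEAST k. \<exists>C. is_RT_covering v m s R C \<and> card C = k)"

end

theory Submission
  imports Defs
begin

definition dcl :: "nat \<Rightarrow> nat set \<Rightarrow> bool" where
  "dcl s T \<longleftrightarrow> (\<forall>i j. j \<in> T \<longrightarrow> rt_le s i j \<longrightarrow> i \<in> T)"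

lemma dcl_Un: "dcl s A \<Longrightarrow> dcl s B \<Longrightarrow> dcl s (A \<union> B)"
  unfolding dcl_def by blast

lemma dcl_blk:
  assumes "0 < s" "r \<le> s"
  shows "dcl s {k*s..<k*s+r}"
  unfolding dcl_def
proof (intro allI impI)
  fix i j assume j: "j \<in> {k*s..<k*s+r}" and le: "rt_le s i j"
  have "j div s = k" using j assms
    by (intro div_nat_eqI) (auto simp: algebra_simps)
  hence "i div s = k" "i \<le> j" using le unfolding rt_le_def by auto
  hence "k * s \<le> i" by (metis div_times_less_eq_dividend)
  thus "i \<in> {k*s..<k*s+r}" using j \<open>i \<le> j\<close> by auto
qed

lemma d_le:
  assumes "finite T" "dcl s T" "\<And>i. i < m*s \<Longrightarrow> x i \<noteq> c i \<Longrightarrow> i \<in> T"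
  shows "d_RT m s x c \<le> card T"
  unfolding d_RT_def
proof (rule card_mono[OF assms(1)])
  show "rt_ideal s {i. i < m * s \<and> x i \<noteq> c i} \<subseteq> T"
    using assms(2,3) unfolding rt_ideal_def dcl_def by blast
qed

lemma K_le: "is_RT_covering v m s R C \<Longrightarrow> K_RT v m s R \<le> card C"
  unfolding K_RT_def by (rule Least_le) blast

lemma words_Suc:
  "words v (Suc n) = (\<lambda>(x,a). x(n:=a)) ` (words v n \<times> {..<v})"
proof
  show "words v (Suc n) \<subseteq> (\<lambda>(x,a). x(n:=a)) ` (words v n \<times> {..<v})"
  proof
    fix y assume y: "y \<in> words v (Suc n)"
    have "y = (\<lambda>(x,a). x(n:=a)) (y(n:=0), y n)" by auto
    moreover have "(y(n:=0), y n) \<in> words v n \<times> {..<v}"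
      using y unfolding words_def by auto
    ultimately show "y \<in> (\<lambda>(x,a). x(n:=a)) ` (words v n \<times> {..<v})" by blast
  qed
next
  show "(\<lambda>(x,a). x(n:=a)) ` (words v n \<times> {..<v}) \<subseteq> words v (Suc n)"
    unfolding words_def by auto
qed

lemma words_card: "finite (words v n) \<and> card (words v n) = v ^ n"
proof (induction n)
  case 0
  have "words v 0 = {\<lambda>_. 0}" unfolding words_def by auto
  thus ?case by simp
next
  case (Suc n)
  have inj: "inj_on (\<lambda>(x,a). x(n:=a)) (words v n \<times> {..<v})"
  proof (rule inj_onI, clarify)
    fix x a y b assume "x \<in> words v n" "y \<in> words v n" "x(n := a) = y(n := b)"
    note h = this
    have ab: "a = b" using h(3) by (rule fun_upd_eqD)
    have "x j = y j" for j
    proof (cases "j = n")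
      case True thus ?thesis using h(1,2) unfolding words_def by auto
    next
      case False thus ?thesis using fun_cong[OF h(3), of j] by simp
    qed
    thus "x = y \<and> a = b" using ab by auto
  qed
  show ?case unfolding words_Suc using Suc inj
    by (simp add: card_image card_cartesian_product)
qed


lemma card_T2: "card (A \<union> B) \<le> card A + card B" by (rule card_Un_le)

definition enc1 :: "nat \<Rightarrow> (nat \<Rightarrow> nat) \<Rightarrow> nat \<Rightarrow> nat" where
  "enc1 s y j = (if j < s then y j else if j = 2*s-2 then y 0 else if j = 2*s-1 then y 1 else 0)"

definition C1 :: "nat \<Rightarrow> nat \<Rightarrow> (nat \<Rightarrow> nat) set" where
  "C1 v s = enc1 s ` {y \<in> words v s. \<not>(y 0 = 0 \<and> y 1 = 0)}"

lemma enc1_words: "0 < v \<Longrightarrow> 2 \<le> s \<Longrightarrow> y \<in> words v s \<Longrightarrow> enc1 s y \<in> words v (2*s)"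
  unfolding words_def enc1_def by auto

lemma C1_card:
  assumes "2 \<le> s" "2 \<le> v"
  shows "card (C1 v s) \<le> v ^ (s - 2) * (v ^ 2 - 1)"
proof -
  define Z where "Z = {y \<in> words v s. y 0 = 0 \<and> y 1 = 0}"
  define sh where "sh = (\<lambda>(x::nat\<Rightarrow>nat) j. if 2 \<le> j then x (j-2) else 0)"
  have fw: "finite (words v s)" "card (words v s) = v ^ s" using words_card by auto
  have ZD: "{y \<in> words v s. \<not>(y 0 = 0 \<and> y 1 = 0)} = words v s - Z" unfolding Z_def by auto
  have Zs: "Z \<subseteq> words v s" unfolding Z_def by auto
  have inj: "inj_on sh (words v (s-2))"
  proof (rule inj_onI)
    fix x y assume "sh x = sh y"
    hence "x j = y j" for j using fun_cong[of "sh x" "sh y" "j+2"] unfolding sh_def by simp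
    thus "x = y" by auto
  qed
  have "sh ` words v (s-2) \<subseteq> Z" unfolding sh_def Z_def words_def using assms by auto
  hence "card (sh ` words v (s-2)) \<le> card Z"
    by (meson Zs card_mono fw(1) finite_subset)
  hence cz: "v ^ (s-2) \<le> card Z" using card_image[OF inj] words_card by simp
  have "card (C1 v s) \<le> card (words v s - Z)" unfolding C1_def ZD
    by (rule card_image_le) (simp add: fw)
  also have "\<dots> = v ^ s - card Z" using card_Diff_subset[OF finite_subset[OF Zs fw(1)] Zs] fw by simp
  also have "\<dots> \<le> v ^ s - v ^ (s-2)" using cz by simp
  also have "\<dots> = v ^ (s - 2) * (v ^ 2 - 1)"
  proof -
    have "s = (s-2) + 2" using assms by simp
    hence "v ^ s = v ^ (s-2) * v ^ 2" by (metis power_add)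
    thus ?thesis by (simp add: diff_mult_distrib2)
  qed
  finally show ?thesis .
qed

lemma C1_cover:
  assumes "2 \<le> s" "2 \<le> v" "x \<in> words v (2*s)"
  shows "\<exists>c\<in>C1 v s. d_RT 2 s x c \<le> s"
proof -
  have s0: "0 < s" using assms by simp
  have xv: "\<And>j. j < 2*s \<Longrightarrow> x j < v" using assms(3) unfolding words_def by auto
  consider (A) "\<not>(x 0 = 0 \<and> x 1 = 0)"
    | (B) "x 0 = 0 \<and> x 1 = 0" "\<not>(x (2*s-2) = 0 \<and> x (2*s-1) = 0)"
    | (C) "x 0 = 0 \<and> x 1 = 0" "x (2*s-2) = 0 \<and> x (2*s-1) = 0" by blast
  thus ?thesis
  proof cases
    case A
    define y where "y = (\<lambda>j. if j < s then x j else 0)"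
    have yw: "y \<in> {y \<in> words v s. \<not>(y 0 = 0 \<and> y 1 = 0)}"
      using A assms xv unfolding y_def words_def by auto
    define T where "T = {1*s..<1*s+s}"
    have "d_RT 2 s x (enc1 s y) \<le> card T"
      apply (rule d_le)
        apply (simp add: T_def)
       apply (unfold T_def, rule dcl_blk; use assms in simp)
      using assms A apply (auto simp: T_def enc1_def y_def split: if_splits)
      done
    thus ?thesis using yw unfolding C1_def T_def by auto
  next
    case B
    define y where "y = (\<lambda>j. if j < s then (if j = 0 then x (2*s-2) else if j = 1 then x (2*s-1) else x j) else 0)"
    have yw: "y \<in> {y \<in> words v s. \<not>(y 0 = 0 \<and> y 1 = 0)}"
      using B assms xv unfolding y_def words_def by auto
    define T where "T = {0*s..<0*s+2} \<union> {1*s..<1*s+(s-2)}"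
    have "d_RT 2 s x (enc1 s y) \<le> card T"
      apply (rule d_le)
        apply (simp add: T_def)
       apply (unfold T_def, rule dcl_Un; rule dcl_blk; use assms in simp)
      using assms B apply (auto simp: T_def enc1_def y_def split: if_splits)
      done
    also have "card T \<le> s" unfolding T_def using card_T2[of "{0*s..<0*s+2}" "{1*s..<1*s+(s-2)}"] assms by simp
    finally show ?thesis using yw unfolding C1_def by auto
  next
    case C
    define y where "y = (\<lambda>j. if j < s then (if j = 0 then 1 else x j) else 0)"
    have yw: "y \<in> {y \<in> words v s. \<not>(y 0 = 0 \<and> y 1 = 0)}"
      using C assms xv unfolding y_def words_def by auto
    define T where "T = {0*s..<0*s+1} \<union> {1*s..<1*s+(s-1)}"
    have "d_RT 2 s x (enc1 s y) \<le> card T"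
      apply (rule d_le)
        apply (simp add: T_def)
       apply (unfold T_def, rule dcl_Un; rule dcl_blk; use assms in simp)
      using assms C apply (auto simp: T_def enc1_def y_def split: if_splits)
      done
    also have "card T \<le> s" unfolding T_def using card_T2[of "{0*s..<0*s+1}" "{1*s..<1*s+(s-1)}"] assms by simp
    finally show ?thesis using yw unfolding C1_def by auto
  qed
qed


definition enc2 :: "nat \<Rightarrow> (nat \<Rightarrow> nat) \<Rightarrow> nat \<Rightarrow> nat \<Rightarrow> nat" where
  "enc2 s u t j = (if j < s then u j else if j = 2*s-1 \<or> j = 3*s-1 then t else 0)"

definition E :: "nat \<Rightarrow> nat \<Rightarrow> nat \<Rightarrow> nat" where
  "E s t = (\<lambda>j. if j = s-1 then t else 0)"

definition D2 :: "nat \<Rightarrow> nat \<Rightarrow> ((nat \<Rightarrow> nat) \<times> nat) set" where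
  "D2 v s = words v s \<times> {..<v} - (\<lambda>t. (E s t, t)) ` {..<v}"

definition C2 :: "nat \<Rightarrow> nat \<Rightarrow> (nat \<Rightarrow> nat) set" where
  "C2 v s = (\<lambda>(u,t). enc2 s u t) ` D2 v s"

lemma C2_card:
  assumes "2 \<le> s" "2 \<le> v"
  shows "card (C2 v s) \<le> v * (v ^ s - 1)"
proof -
  have fw: "finite (words v s)" "card (words v s) = v ^ s" using words_card by auto
  have Ss: "(\<lambda>t. (E s t, t)) ` {..<v} \<subseteq> words v s \<times> {..<v}"
    unfolding E_def words_def using assms by auto
  have inj: "inj_on (\<lambda>t. (E s t, t)) {..<v}" by (rule inj_onI) simp
  have fp: "finite (words v s \<times> {..<v})" using fw by simp
  have "card (C2 v s) \<le> card (D2 v s)" unfolding C2_def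
    by (rule card_image_le) (simp add: D2_def fw)
  also have "\<dots> = v ^ s * v - v" unfolding D2_def
    using card_Diff_subset[OF finite_subset[OF Ss fp] Ss] card_image[OF inj] fw
    by (simp add: card_cartesian_product)
  also have "\<dots> = v * (v ^ s - 1)" by (simp add: diff_mult_distrib2 mult.commute)
  finally show ?thesis .
qed

lemma enc2_words: "y \<in> words v s \<Longrightarrow> t < v \<Longrightarrow> 2 \<le> s \<Longrightarrow> enc2 s y t \<in> words v (3*s)"
  unfolding words_def enc2_def by auto

lemma C2_cover:
  assumes "2 \<le> s" "2 \<le> v" "x \<in> words v (3*s)"
  shows "\<exists>c\<in>C2 v s. d_RT 3 s x c \<le> 2*s-1"
proof -
  have xv: "\<And>j. j < 3*s \<Longrightarrow> x j < v" using assms(3) unfolding words_def by auto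
  define a where "a = (\<lambda>j. if j < s then x j else 0)"
  define t where "t = x (2*s-1)"
  define t' where "t' = x (3*s-1)"
  have aw: "a \<in> words v s" unfolding a_def words_def using xv by auto
  have tv: "t < v" "t' < v" unfolding t_def t'_def using xv assms by auto
  consider (A) "a \<noteq> E s t" | (B) "a = E s t" "t' \<noteq> t" | (C) "a = E s t" "t' = t" by blast
  thus ?thesis
  proof cases
    case A
    have mem: "(a, t) \<in> D2 v s" unfolding D2_def using aw tv A by auto
    define T where "T = {1*s..<1*s+(s-1)} \<union> {2*s..<2*s+s}"
    have "d_RT 3 s x (enc2 s a t) \<le> card T"
      apply (rule d_le)
        apply (simp add: T_def)
       apply (unfold T_def, rule dcl_Un; rule dcl_blk; use assms in simp)
      using assms apply (auto simp: T_def enc2_def a_def t_def split: if_splits)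
      done
    also have "card T \<le> 2*s-1" unfolding T_def using card_T2[of "{1*s..<1*s+(s-1)}" "{2*s..<2*s+s}"] assms by simp
    finally show ?thesis using mem unfolding C2_def by force
  next
    case B
    have "E s t (s-1) \<noteq> E s t' (s-1)" using B unfolding E_def by simp
    hence mem: "(a, t') \<in> D2 v s" unfolding D2_def using aw tv B by auto
    define T where "T = {1*s..<1*s+s} \<union> {2*s..<2*s+(s-1)}"
    have "d_RT 3 s x (enc2 s a t') \<le> card T"
      apply (rule d_le)
        apply (simp add: T_def)
       apply (unfold T_def, rule dcl_Un; rule dcl_blk; use assms in simp)
      using assms apply (auto simp: T_def enc2_def a_def t'_def split: if_splits)
      done
    also have "card T \<le> 2*s-1" unfolding T_def using card_T2[of "{1*s..<1*s+s}" "{2*s..<2*s+(s-1)}"] assms by simp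
    finally show ?thesis using mem unfolding C2_def by force
  next
    case C
    define a' where "a' = a(0 := if a 0 = 0 then 1 else 0)"
    have ai: "\<And>i. i < s \<Longrightarrow> a i = x i" unfolding a_def by simp
    have xt: "x (3*s-1) = t" "x (2*s-1) = t" using C unfolding t_def t'_def by auto
    have a'w: "a' \<in> words v s" using aw assms unfolding a'_def words_def by auto
    have "a' 0 \<noteq> a 0" unfolding a'_def by simp
    hence "a' \<noteq> E s t" using C by auto
    hence mem: "(a', t) \<in> D2 v s" unfolding D2_def using a'w tv by auto
    define T where "T = {0*s..<0*s+1} \<union> ({1*s..<1*s+(s-1)} \<union> {2*s..<2*s+(s-1)})"
    have "d_RT 3 s x (enc2 s a' t) \<le> card T"
      apply (rule d_le)
        apply (simp add: T_def)
       apply (unfold T_def, rule dcl_Un; (rule dcl_Un)?; rule dcl_blk; use assms in simp)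
      using assms ai xt apply (auto simp: T_def enc2_def a'_def split: if_splits)
      done
    also have "card T \<le> 2*s-1" unfolding T_def
      using card_T2[of "{0*s..<0*s+1}" "{1*s..<1*s+(s-1)} \<union> {2*s..<2*s+(s-1)}"]
        card_T2[of "{1*s..<1*s+(s-1)}" "{2*s..<2*s+(s-1)}"] assms by simp
    finally show ?thesis using mem unfolding C2_def by force
  qed
qed

theorem theorem4:
  fixes v s :: nat
  assumes "v \<ge> 2" and "s \<ge> 2"
  shows "K_RT v 2 s s \<le> v ^ (s - 2) * (v ^ 2 - 1) \<and>
         K_RT v 3 s (2 * s - 1) \<le> v * (v ^ s - 1)"
proof
  have "is_RT_covering v 2 s s (C1 v s)"
    unfolding is_RT_covering_def
  proof
    show "C1 v s \<subseteq> words v (2 * s)" unfolding C1_def using enc1_words assms by auto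
    show "\<forall>x\<in>words v (2 * s). \<exists>c\<in>C1 v s. d_RT 2 s x c \<le> s" using C1_cover assms by blast
  qed
  thus "K_RT v 2 s s \<le> v ^ (s - 2) * (v ^ 2 - 1)"
    using K_le C1_card assms le_trans by blast
next
  have "is_RT_covering v 3 s (2*s-1) (C2 v s)"
    unfolding is_RT_covering_def
  proof
    show "C2 v s \<subseteq> words v (3 * s)" unfolding C2_def D2_def using enc2_words assms by auto
    show "\<forall>x\<in>words v (3 * s). \<exists>c\<in>C2 v s. d_RT 3 s x c \<le> 2*s-1" using C2_cover assms by blast
  qed
  thus "K_RT v 3 s (2 * s - 1) \<le> v * (v ^ s - 1)"
    using K_le C2_card assms le_trans by blast
qed

end
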